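(* Let $P$ be a convex polygon, let $\mathcal{R}$ be the smallest axis-parallel rectangle containing $P$, with side lengths $L\ge W>0$, and let $r=\frac14\sqrt{L^2+4W^2}$. Suppose that $P$ has four distinct vertices lying respectively on the four different sides of $\mathcal{R}$ and forming a (nondegenerate) quadrilateral. Then $r\le 2\,r_{opt}(P)$.
   Context: For a compact set $X\subset\mathbb{R}^2$, $r_{opt}(X)$ denotes the minimum $r$ such that two closed disks of radius $r$ have union containing $X$. The number $r$ is the radius of the two congruent disks circumscribing the two halves $\frac L2\times W$ of $\mathcal{R}$ obtained by splitting it through its longer sides' midpoints. *)

theory Defs
  imports "HOL-Analysis.Analysis"
begin

text \<open>Points of the plane are pairs of reals; the product metric is Euclidean.\<close>

definition r_opt :: "(real \<times> real) set \<Rightarrow> real" where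
  "r_opt X = Inf {r. \<exists>c1 c2. X \<subseteq> cball c1 r \<union> cball c2 r}"

definition convex_polygon :: "(real \<times> real) set \<Rightarrow> bool" where
  "convex_polygon P \<longleftrightarrow> (\<exists>V. finite V \<and> P = convex hull V) \<and> interior P \<noteq> {}"

definition vertex_of :: "(real \<times> real) \<Rightarrow> (real \<times> real) set \<Rightarrow> bool" where
  "vertex_of v P \<longleftrightarrow> v extreme_point_of P"

text \<open>The smallest axis-parallel rectangle containing P is
  [xmin P, xmax P] \<times> [ymin P, ymax P].\<close>
definition xmin :: "(real \<times> real) set \<Rightarrow> real" where "xmin P = Inf (fst ` P)"
definition xmax :: "(real \<times> real) set \<Rightarrow> real" where "xmax P = Sup (fst ` P)"
definition ymin :: "(real \<times> real) set \<Rightarrow> real" where "ymin P = Inf (snd ` P)"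
definition ymax :: "(real \<times> real) set \<Rightarrow> real" where "ymax P = Sup (snd ` P)"

end

theory Submission
  imports Defs
begin


lemma nonneg_from: "(k::real) > 0 \<Longrightarrow> k*Z = S \<Longrightarrow> 0 \<le> S \<Longrightarrow> 0 \<le> Z"
  by (metis mult_pos_neg not_le)

lemma quad_aux:
  fixes L W D :: real
  assumes "0 \<le> W" "W \<le> L" "0 \<le> D" "16*D^2 = L^2 + 4*W^2"
  shows "D^2 \<le> (L-D)^2 + (W-D)^2"
proof -
  define E where "E = 4*L+5*W"
  define F where "F = 16*D"
  have "F^2 \<le> E^2"
  proof -
    have "W*W \<le> L*W" using assms by (intro mult_right_mono) auto
    moreover have "0 \<le> L*W" using assms by simp
    moreover have "E^2 = 16*(L*L)+40*(L*W)+25*(W*W)" unfolding E_def by algebra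
    moreover have "F^2 = 16*(16*D^2)" unfolding F_def by algebra
    moreover have "16*D^2 = L*L + 4*(W*W)" using assms(4) by (simp add: power2_eq_square)
    ultimately show ?thesis by linarith
  qed
  hence FE: "F \<le> E" by (rule power2_le_imp_le) (use assms in \<open>simp add: E_def\<close>)
  have hE: "0 \<le> E^2 - 32*E*(L+W) + 256*(L^2+W^2)"
  proof -
    have eq9: "9*(E^2 - 32*E*(L+W) + 256*(L^2+W^2)) = (36*L - 31*W)^2 + 128*W^2"
      unfolding E_def by algebra
    have S0: "0 \<le> (36*L - 31*W)^2 + 128*W^2" by simp
    show ?thesis by (rule nonneg_from[OF _ eq9 S0]) simp
  qed
  have diff: "(F^2 - 32*F*(L+W)) - (E^2 - 32*E*(L+W)) = (E - F)*(32*(L+W) - F - E)" by algebra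
  have "0 \<le> (E - F)*(32*(L+W) - F - E)"
    using FE assms unfolding E_def by (intro mult_nonneg_nonneg) auto
  hence G0: "0 \<le> F^2 - 32*F*(L+W) + 256*(L^2+W^2)" using diff hE by linarith
  have eq256: "256*((L-D)^2 + (W-D)^2 - D^2) = F^2 - 32*F*(L+W) + 256*(L^2+W^2)"
    unfolding F_def by algebra
  have "0 \<le> (L-D)^2 + (W-D)^2 - D^2" by (rule nonneg_from[OF _ eq256 G0]) simp
  thus ?thesis by simp
qed

lemma core:
  fixes X Y D t p q dA dB dC dD :: real
  assumes t0: "0 \<le> t" and t1: "t \<le> 1" and p0: "0 \<le> p" and q0: "0 \<le> q"
    and X0: "0 < X" and Y0: "0 < Y"
    and Deq: "16*D^2 = (max X Y)^2 + 4*(min X Y)^2" and D0: "0 \<le> D"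
    and hA: "X - (1-t)*p \<le> dA" and hD: "Y - t*q \<le> dD"
    and hB: "dB = t * sqrt(p^2+q^2)" and hC: "dC = (1-t) * sqrt(p^2+q^2)"
  shows "D \<le> max (max dA dB) (max dC dD)"
proof (rule ccontr)
  assume "\<not> ?thesis"
  hence lA: "dA < D" and lB: "dB < D" and lC: "dC < D" and lD: "dD < D" by auto
  define s where "s = sqrt(p^2+q^2)"
  define u where "u = 1 - t"
  have u0: "0 \<le> u" using t1 u_def by simp
  have ps: "p \<le> s" unfolding s_def by (rule real_le_rsqrt) simp
  have qs: "q \<le> s" unfolding s_def by (rule real_le_rsqrt) simp
  have s0: "0 \<le> s" unfolding s_def by simp
  have ss: "s^2 = p^2 + q^2" unfolding s_def by simp
  have hC': "dC = u * s" using hC u_def s_def by simp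
  have hB': "dB = t * s" using hB s_def by simp
  have hA': "X - u*p \<le> dA" using hA u_def by simp
  have "u*p \<le> u * s" using ps u0 by (rule mult_left_mono)
  hence X2: "X < 2*D" using hA' lA lC hC' by linarith
  have "t*q \<le> t * s" using qs t0 by (rule mult_left_mono)
  hence Y2: "Y < 2*D" using hD lD lB hB' by linarith
  define L where "L = max X Y"
  define W where "W = min X Y"
  have Deq': "16*D^2 = L^2 + 4*W^2" using Deq unfolding L_def W_def .
  have L2: "L < 2*D" using X2 Y2 unfolding L_def by simp
  have L0: "0 \<le> L" using X0 unfolding L_def by simp
  have W0: "0 < W" using X0 Y0 unfolding W_def by simp
  have WL: "W \<le> L" unfolding L_def W_def by simp
  have "L^2 < (2*D)^2" using L2 L0 by (intro power_strict_mono) auto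
  moreover have "(2*D)^2 = 4*D^2" by simp
  ultimately have "3*L^2 < 4*W^2" using Deq' by linarith
  moreover have "0 \<le> W^2" by simp
  ultimately have "D^2 < W^2" using Deq' by linarith
  hence DW: "D < W" using W0 by (intro power_less_imp_less_base[of D 2 W]) auto
  have XD: "D < X" and YD: "D < Y" using DW unfolding W_def by auto
  have upA: "X - D < u*p" using hA lA u_def by simp
  have tqB: "Y - D < t*q" using hD lD by simp
  have key: "(X-D)^2 + (Y-D)^2 < D^2"
  proof (cases "t \<le> u")
    case True
    have "(X-D)^2 < (u*p)^2" using upA XD by (intro power_strict_mono) auto
    moreover have "(Y-D)^2 < (t*q)^2" using tqB YD by (intro power_strict_mono) auto
    moreover have "(t*q)^2 \<le> (u*q)^2" using True t0 q0 by (intro power_mono mult_right_mono) auto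
    moreover have "(u * s)^2 = (u*p)^2 + (u*q)^2" using ss by (simp add: power_mult_distrib algebra_simps)
    moreover have "(u * s)^2 < D^2"
    proof -
      have "0 \<le> u * s" using u0 s0 by simp
      thus ?thesis using lC hC' by (intro power_strict_mono) auto
    qed
    ultimately show ?thesis by linarith
  next
    case False
    have "(X-D)^2 < (u*p)^2" using upA XD by (intro power_strict_mono) auto
    moreover have "(Y-D)^2 < (t*q)^2" using tqB YD by (intro power_strict_mono) auto
    moreover have "(u*p)^2 \<le> (t*p)^2" using False u0 p0 by (intro power_mono mult_right_mono) auto
    moreover have "(t * s)^2 = (t*p)^2 + (t*q)^2" using ss by (simp add: power_mult_distrib algebra_simps)
    moreover have "(t * s)^2 < D^2"
    proof -
      have "0 \<le> t * s" using t0 s0 by simp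
      thus ?thesis using lB hB' by (intro power_strict_mono) auto
    qed
    ultimately show ?thesis by linarith
  qed
  have "D^2 \<le> (L-D)^2 + (W-D)^2"
    using W0 WL D0 Deq' by (intro quad_aux) auto
  moreover have "(L-D)^2 + (W-D)^2 = (X-D)^2 + (Y-D)^2"
  proof (cases "X \<le> Y")
    case True thus ?thesis unfolding L_def W_def by (simp add: max_def min_def)
  next
    case False thus ?thesis unfolding L_def W_def by (simp add: max_def min_def)
  qed
  ultimately show False using key by linarith
qed

lemma dist_fst_ge: "fst x - fst y \<le> dist x (y::real\<times>real)"
  using dist_fst_le[of x y] by (simp add: dist_real_def)
lemma dist_fst_ge': "fst y - fst x \<le> dist x (y::real\<times>real)"
  using dist_fst_le[of x y] by (simp add: dist_real_def)
lemma dist_snd_ge: "snd x - snd y \<le> dist x (y::real\<times>real)"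
  using dist_snd_le[of x y] by (simp add: dist_real_def)
lemma dist_snd_ge': "snd y - snd x \<le> dist x (y::real\<times>real)"
  using dist_snd_le[of x y] by (simp add: dist_real_def)

lemma dist_coords: "dist u (w::real\<times>real) = sqrt((fst w - fst u)^2 + (snd w - snd u)^2)"
  by (simp add: dist_prod_def dist_real_def power2_commute)

lemma seg_dist:
  fixes u w :: "real\<times>real"
  assumes "0 \<le> t" "t \<le> 1"
  shows "dist ((1-t) *\<^sub>R u + t *\<^sub>R w) u = t * dist u w"
    and "dist ((1-t) *\<^sub>R u + t *\<^sub>R w) w = (1-t) * dist u w"
proof -
  have "(1-t) *\<^sub>R u + t *\<^sub>R w - u = t *\<^sub>R (w - u)" by (simp add: algebra_simps)
  thus "dist ((1-t) *\<^sub>R u + t *\<^sub>R w) u = t * dist u w"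
    using assms by (simp add: dist_norm norm_minus_commute)
  have "(1-t) *\<^sub>R u + t *\<^sub>R w - w = (1-t) *\<^sub>R (u - w)" by (simp add: algebra_simps)
  thus "dist ((1-t) *\<^sub>R u + t *\<^sub>R w) w = (1-t) * dist u w"
    using assms by (simp add: dist_norm)
qed

lemma core':
  fixes X Y D t p q dA dB dC dD :: real
  assumes "0 \<le> t" "t \<le> 1" "0 \<le> p" "0 \<le> q" "0 < X" "0 < Y"
    "16*D^2 = (max X Y)^2 + 4*(min X Y)^2" "0 \<le> D"
    "X - (1-t)*p \<le> dA" "Y - t*q \<le> dD"
    "dB = t * sqrt(p^2+q^2)" "dC = (1-t) * sqrt(p^2+q^2)"
  shows "D \<le> dA \<or> D \<le> dB \<or> D \<le> dC \<or> D \<le> dD"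
  using core[OF assms] by linarith

locale rect =
  fixes x0 x1 y0 y1 D :: real and a b c d :: "real\<times>real"
  assumes fa: "fst a = x0" and sb: "snd b = y0" and fc: "fst c = x1" and sd: "snd d = y1"
    and bx: "x0 \<le> fst b" "fst b \<le> x1" and dx: "x0 \<le> fst d" "fst d \<le> x1"
    and ay: "y0 \<le> snd a" "snd a \<le> y1" and cy: "y0 \<le> snd c" "snd c \<le> y1"
    and X0: "0 < x1 - x0" and Y0: "0 < y1 - y0"
    and Deq: "16*D^2 = (max (x1-x0) (y1-y0))^2 + 4*(min (x1-x0) (y1-y0))^2" and D0: "0 \<le> D"
begin

definition "good e \<longleftrightarrow> D \<le> dist e a \<or> D \<le> dist e b \<or> D \<le> dist e c \<or> D \<le> dist e d"

lemma edge_bc: assumes "e \<in> closed_segment b c" shows "good e"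
proof -
  obtain t where t: "0 \<le> t" "t \<le> 1" and e: "e = (1-t) *\<^sub>R b + t *\<^sub>R c"
    using assms by (auto simp: closed_segment_def)
  have fe: "fst e = (1-t)* fst b + t* fst c" and se: "snd e = (1-t)* snd b + t* snd c" using e by auto
  have "D \<le> dist e a \<or> D \<le> dist e b \<or> D \<le> dist e c \<or> D \<le> dist e d"
  proof (rule core'[of t "x1 - fst b" "snd c - y0" "x1-x0" "y1-y0"])
    show "x1 - x0 - (1 - t) * (x1 - fst b) \<le> dist e a"
    proof -
      have "x1 - x0 - (1 - t) * (x1 - fst b) = fst e - fst a" using fa fa sb fc sd fe se by (simp add: algebra_simps)
      thus ?thesis using dist_fst_ge[of e a] by linarith
    qed
    show "y1 - y0 - t * (snd c - y0) \<le> dist e d"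
    proof -
      have "y1 - y0 - t * (snd c - y0) = snd d - snd e" using sd sb fa sb fc sd fe se by (simp add: algebra_simps)
      thus ?thesis using dist_snd_ge'[of d e] by linarith
    qed
    show "dist e b = t * sqrt ((x1 - fst b)\<^sup>2 + (snd c - y0)\<^sup>2)"
      using seg_dist(1)[OF t, of b c] e dist_coords[of b c] fc sb by simp
    show "dist e c = (1-t) * sqrt ((x1 - fst b)\<^sup>2 + (snd c - y0)\<^sup>2)"
      using seg_dist(2)[OF t, of b c] e dist_coords[of b c] fc sb by simp
  qed (use t bx cy X0 Y0 Deq D0 in auto)
  thus ?thesis unfolding good_def .
qed

lemma edge_ab: assumes "e \<in> closed_segment a b" shows "good e"
proof -
  obtain t where t: "0 \<le> t" "t \<le> 1" and e: "e = (1-t) *\<^sub>R a + t *\<^sub>R b"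
    using assms by (auto simp: closed_segment_def)
  have fe: "fst e = (1-t)* fst a + t* fst b" and se: "snd e = (1-t)* snd a + t* snd b" using e by auto
  have "D \<le> dist e c \<or> D \<le> dist e b \<or> D \<le> dist e a \<or> D \<le> dist e d"
  proof (rule core'[of "1-t" "fst b - x0" "snd a - y0" "x1-x0" "y1-y0"])
    show "x1 - x0 - (1 - (1-t)) * (fst b - x0) \<le> dist e c"
    proof -
      have "x1 - x0 - (1 - (1-t)) * (fst b - x0) = fst c - fst e" using fc fa fa sb fc sd fe se by (simp add: algebra_simps)
      thus ?thesis using dist_fst_ge'[of c e] by linarith
    qed
    show "y1 - y0 - (1-t) * (snd a - y0) \<le> dist e d"
    proof -
      have "y1 - y0 - (1-t) * (snd a - y0) = snd d - snd e" using sd sb fa sb fc sd fe se by (simp add: algebra_simps)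
      thus ?thesis using dist_snd_ge'[of d e] by linarith
    qed
    show "dist e b = (1-t) * sqrt ((fst b - x0)\<^sup>2 + (snd a - y0)\<^sup>2)"
      using seg_dist(2)[OF t, of a b] e dist_coords[of a b] fa sb by (simp add: power2_commute)
    show "dist e a = (1-(1-t)) * sqrt ((fst b - x0)\<^sup>2 + (snd a - y0)\<^sup>2)"
      using seg_dist(1)[OF t, of a b] e dist_coords[of a b] fa sb by (simp add: power2_commute)
  qed (use t bx ay X0 Y0 Deq D0 in auto)
  thus ?thesis unfolding good_def by blast
qed

lemma edge_cd: assumes "e \<in> closed_segment c d" shows "good e"
proof -
  obtain t where t: "0 \<le> t" "t \<le> 1" and e: "e = (1-t) *\<^sub>R c + t *\<^sub>R d"
    using assms by (auto simp: closed_segment_def)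
  have fe: "fst e = (1-t)* fst c + t* fst d" and se: "snd e = (1-t)* snd c + t* snd d" using e by auto
  have "D \<le> dist e a \<or> D \<le> dist e d \<or> D \<le> dist e c \<or> D \<le> dist e b"
  proof (rule core'[of "1-t" "x1 - fst d" "y1 - snd c" "x1-x0" "y1-y0"])
    show "x1 - x0 - (1 - (1-t)) * (x1 - fst d) \<le> dist e a"
    proof -
      have "x1 - x0 - (1 - (1-t)) * (x1 - fst d) = fst e - fst a" using fc fa fa sb fc sd fe se by (simp add: algebra_simps)
      thus ?thesis using dist_fst_ge[of e a] by linarith
    qed
    show "y1 - y0 - (1-t) * (y1 - snd c) \<le> dist e b"
    proof -
      have "y1 - y0 - (1-t) * (y1 - snd c) = snd e - snd b" using sd sb fa sb fc sd fe se by (simp add: algebra_simps)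
      thus ?thesis using dist_snd_ge[of e b] by linarith
    qed
    show "dist e d = (1-t) * sqrt ((x1 - fst d)\<^sup>2 + (y1 - snd c)\<^sup>2)"
      using seg_dist(2)[OF t, of c d] e dist_coords[of c d] fc sd by (simp add: power2_commute)
    show "dist e c = (1-(1-t)) * sqrt ((x1 - fst d)\<^sup>2 + (y1 - snd c)\<^sup>2)"
      using seg_dist(1)[OF t, of c d] e dist_coords[of c d] fc sd by (simp add: power2_commute)
  qed (use t dx cy X0 Y0 Deq D0 in auto)
  thus ?thesis unfolding good_def by blast
qed

lemma edge_da: assumes "e \<in> closed_segment d a" shows "good e"
proof -
  obtain t where t: "0 \<le> t" "t \<le> 1" and e: "e = (1-t) *\<^sub>R d + t *\<^sub>R a"
    using assms by (auto simp: closed_segment_def)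
  have fe: "fst e = (1-t)* fst d + t* fst a" and se: "snd e = (1-t)* snd d + t* snd a" using e by auto
  have "D \<le> dist e c \<or> D \<le> dist e d \<or> D \<le> dist e a \<or> D \<le> dist e b"
  proof (rule core'[of t "fst d - x0" "y1 - snd a" "x1-x0" "y1-y0"])
    show "x1 - x0 - (1 - t) * (fst d - x0) \<le> dist e c"
    proof -
      have "x1 - x0 - (1 - t) * (fst d - x0) = fst c - fst e" using fc fa fa sb fc sd fe se by (simp add: algebra_simps)
      thus ?thesis using dist_fst_ge'[of c e] by linarith
    qed
    show "y1 - y0 - t * (y1 - snd a) \<le> dist e b"
    proof -
      have "y1 - y0 - t * (y1 - snd a) = snd e - snd b" using sd sb fa sb fc sd fe se by (simp add: algebra_simps)
      thus ?thesis using dist_snd_ge[of e b] by linarith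
    qed
    show "dist e d = t * sqrt ((fst d - x0)\<^sup>2 + (y1 - snd a)\<^sup>2)"
      using seg_dist(1)[OF t, of d a] e dist_coords[of d a] fa sd by (simp add: power2_commute)
    show "dist e a = (1-t) * sqrt ((fst d - x0)\<^sup>2 + (y1 - snd a)\<^sup>2)"
      using seg_dist(2)[OF t, of d a] e dist_coords[of d a] fa sd by (simp add: power2_commute)
  qed (use t dx ay X0 Y0 Deq D0 in auto)
  thus ?thesis unfolding good_def by blast
qed

end

lemma split_lemma:
  fixes u w c1 c2 :: "real\<times>real"
  assumes S: "closed_segment u w \<subseteq> cball c1 \<rho> \<union> cball c2 \<rho>"
    and u: "u \<in> cball c1 \<rho>" and w: "w \<in> cball c2 \<rho>"
    and G: "\<forall>e\<in>closed_segment u w. \<exists>v\<in>V. D \<le> dist e v"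
    and V: "V \<subseteq> cball c1 \<rho> \<union> cball c2 \<rho>"
  shows "D \<le> 2*\<rho>"
proof -
  have "connected (closed_segment u w)" by simp
  hence "\<not> (closed (cball c1 \<rho>) \<and> closed (cball c2 \<rho>) \<and> closed_segment u w \<subseteq> cball c1 \<rho> \<union> cball c2 \<rho>
     \<and> cball c1 \<rho> \<inter> cball c2 \<rho> \<inter> closed_segment u w = {} \<and> cball c1 \<rho> \<inter> closed_segment u w \<noteq> {}
     \<and> cball c2 \<rho> \<inter> closed_segment u w \<noteq> {})"
    unfolding connected_closed by blast
  moreover have "cball c1 \<rho> \<inter> closed_segment u w \<noteq> {}" using u by auto
  moreover have "cball c2 \<rho> \<inter> closed_segment u w \<noteq> {}" using w by auto
  ultimately have "cball c1 \<rho> \<inter> cball c2 \<rho> \<inter> closed_segment u w \<noteq> {}" using S by auto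
  then obtain e where e: "e \<in> closed_segment u w" "e \<in> cball c1 \<rho>" "e \<in> cball c2 \<rho>" by blast
  then obtain v where v: "v \<in> V" "D \<le> dist e v" using G by blast
  have "dist e v \<le> 2*\<rho>"
  proof (cases "v \<in> cball c1 \<rho>")
    case True
    thus ?thesis using e dist_triangle[of e v c1] by (simp add: dist_commute)
  next
    case False
    hence "v \<in> cball c2 \<rho>" using v V by blast
    thus ?thesis using e dist_triangle[of e v c2] by (simp add: dist_commute)
  qed
  thus ?thesis using v by linarith
qed

lemma same_ball: "x \<in> cball c \<rho> \<Longrightarrow> y \<in> cball c \<rho> \<Longrightarrow> dist x y \<le> 2*\<rho>"
  using dist_triangle[of x y c] by (simp add: dist_commute)

theorem lemma1:
  fixes P :: "(real \<times> real) set" and a b c d :: "real \<times> real" and L W :: real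
  assumes "convex_polygon P"
    and "L = max (xmax P - xmin P) (ymax P - ymin P)"
    and "W = min (xmax P - xmin P) (ymax P - ymin P)"
    and "W > 0"
    and "vertex_of a P" and "vertex_of b P" and "vertex_of c P" and "vertex_of d P"
    and "distinct [a, b, c, d]"
    and "fst a = xmin P" and "snd b = ymin P" and "fst c = xmax P" and "snd d = ymax P"
    and "interior (convex hull {a, b, c, d}) \<noteq> {}"
  shows "(1/4) * sqrt (L^2 + 4 * W^2) \<le> 2 * r_opt P"
proof -
  obtain V where V: "finite V" "P = convex hull V" using assms(1) unfolding convex_polygon_def by blast
  have cvx: "convex P" using V by simp
  have cpt: "compact P" using V by (simp add: compact_convex_hull finite_imp_compact)
  have bdd: "bounded P" using cpt by (rule compact_imp_bounded)
  have inP: "a \<in> P" "b \<in> P" "c \<in> P" "d \<in> P" using assms(5-8)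
    unfolding vertex_of_def extreme_point_of_def by auto
  have bf: "bounded (fst ` P)" by (rule bounded_linear_image[OF bdd bounded_linear_fst])
  have bs: "bounded (snd ` P)" by (rule bounded_linear_image[OF bdd bounded_linear_snd])
  have fx: "xmin P \<le> fst v \<and> fst v \<le> xmax P" if "v \<in> P" for v
  proof
    have "fst v \<in> fst ` P" using that by (rule imageI)
    thus "xmin P \<le> fst v" unfolding xmin_def by (rule cInf_lower[OF _ bounded_imp_bdd_below[OF bf]])
    show "fst v \<le> xmax P" unfolding xmax_def using \<open>fst v \<in> fst ` P\<close>
      by (rule cSup_upper[OF _ bounded_imp_bdd_above[OF bf]])
  qed
  have fy: "ymin P \<le> snd v \<and> snd v \<le> ymax P" if "v \<in> P" for v
  proof
    have "snd v \<in> snd ` P" using that by (rule imageI)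
    thus "ymin P \<le> snd v" unfolding ymin_def by (rule cInf_lower[OF _ bounded_imp_bdd_below[OF bs]])
    show "snd v \<le> ymax P" unfolding ymax_def using \<open>snd v \<in> snd ` P\<close>
      by (rule cSup_upper[OF _ bounded_imp_bdd_above[OF bs]])
  qed
  define D where "D = (1/4) * sqrt (L^2 + 4 * W^2)"
  have D0: "0 \<le> D" unfolding D_def by simp
  have Deq0: "16*D^2 = L^2 + 4*W^2"
  proof -
    have "(sqrt (L^2 + 4*W^2))^2 = L^2 + 4*W^2" by simp
    moreover have "D^2 = (1/4)^2 * (sqrt (L^2+4*W^2))^2" unfolding D_def by (rule power_mult_distrib)
    ultimately show ?thesis by (simp add: power2_eq_square)
  qed
  have "W \<le> xmax P - xmin P" "W \<le> ymax P - ymin P" using assms(3) by simp_all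
  hence X0: "0 < xmax P - xmin P" and Y0: "0 < ymax P - ymin P" using assms(4) by linarith+
  interpret rect "xmin P" "xmax P" "ymin P" "ymax P" D a b c d
  proof -
    have "16*D^2 = (max (xmax P - xmin P) (ymax P - ymin P))^2 + 4*(min (xmax P - xmin P) (ymax P - ymin P))^2"
      using Deq0 assms(2,3) by simp
    thus "rect (xmin P) (xmax P) (ymin P) (ymax P) D a b c d" unfolding rect_def
      using assms(10-13) fx[OF inP(2)] fx[OF inP(4)] fy[OF inP(1)] fy[OF inP(3)] X0 Y0 D0 by blast
  qed
  have DL: "D \<le> L"
  proof -
    have "W \<le> L" using assms(2,3) by simp
    hence "W^2 \<le> L^2" using assms(4) by (intro power_mono) auto
    moreover have "0 \<le> L^2" by simp
    ultimately have "D^2 \<le> L^2" using Deq0 by linarith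
    thus ?thesis by (rule power2_le_imp_le) (use \<open>W \<le> L\<close> assms(4) in linarith)
  qed
  have key: "D \<le> 2*\<rho>" if cov: "P \<subseteq> cball c1 \<rho> \<union> cball c2 \<rho>" for \<rho> c1 c2
  proof -
    have Vs: "{a,b,c,d} \<subseteq> cball c1 \<rho> \<union> cball c2 \<rho>" using cov inP by auto
    have segs: "closed_segment u w \<subseteq> cball c1 \<rho> \<union> cball c2 \<rho>" if "u \<in> P" "w \<in> P" for u w
      using closed_segment_subset[OF that cvx] cov by blast
    have gd: "\<forall>e\<in>closed_segment u w. \<exists>v\<in>{a,b,c,d}. D \<le> dist e v"
      if "(\<forall>e. e \<in> closed_segment u w \<longrightarrow> good e)" for u w
      using that unfolding good_def by blast
    have gab: "\<forall>e\<in>closed_segment a b. \<exists>v\<in>{a,b,c,d}. D \<le> dist e v" using gd edge_ab by blast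
    have gbc: "\<forall>e\<in>closed_segment b c. \<exists>v\<in>{a,b,c,d}. D \<le> dist e v" using gd edge_bc by blast
    have gcd: "\<forall>e\<in>closed_segment c d. \<exists>v\<in>{a,b,c,d}. D \<le> dist e v" using gd edge_cd by blast
    have gda: "\<forall>e\<in>closed_segment d a. \<exists>v\<in>{a,b,c,d}. D \<le> dist e v" using gd edge_da by blast
    have E: "D \<le> 2*\<rho>" if "u \<in> P" "w \<in> P" "u \<in> cball c1 \<rho>" "w \<notin> cball c1 \<rho>"
      "\<forall>e\<in>closed_segment u w. \<exists>v\<in>{a,b,c,d}. D \<le> dist e v" for u w
    proof -
      have "w \<in> cball c2 \<rho>" using that cov by blast
      thus ?thesis using split_lemma[OF segs[OF that(1,2)] that(3) _ that(5) Vs] by blast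
    qed
    have E': "D \<le> 2*\<rho>" if "u \<in> P" "w \<in> P" "u \<notin> cball c1 \<rho>" "w \<in> cball c1 \<rho>"
      "\<forall>e\<in>closed_segment u w. \<exists>v\<in>{a,b,c,d}. D \<le> dist e v" for u w
    proof -
      have "u \<in> cball c2 \<rho>" using that cov by blast
      moreover have "closed_segment u w \<subseteq> cball c2 \<rho> \<union> cball c1 \<rho>" using segs[OF that(1,2)] by blast
      moreover have "{a,b,c,d} \<subseteq> cball c2 \<rho> \<union> cball c1 \<rho>" using Vs by blast
      ultimately show ?thesis using split_lemma[of u w c2 \<rho> c1] that by blast
    qed
    consider "a \<in> cball c1 \<rho> \<and> b \<in> cball c1 \<rho> \<and> c \<in> cball c1 \<rho> \<and> d \<in> cball c1 \<rho>"
      | "a \<notin> cball c1 \<rho> \<and> b \<notin> cball c1 \<rho> \<and> c \<notin> cball c1 \<rho> \<and> d \<notin> cball c1 \<rho>"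
      | "(a \<in> cball c1 \<rho>) \<noteq> (b \<in> cball c1 \<rho>)" | "(b \<in> cball c1 \<rho>) \<noteq> (c \<in> cball c1 \<rho>)"
      | "(c \<in> cball c1 \<rho>) \<noteq> (d \<in> cball c1 \<rho>)" | "(d \<in> cball c1 \<rho>) \<noteq> (a \<in> cball c1 \<rho>)"
      by blast
    thus ?thesis
    proof cases
      case 1
      hence "dist a c \<le> 2*\<rho>" "dist b d \<le> 2*\<rho>" using same_ball[of a c1 \<rho> c] same_ball[of b c1 \<rho> d] by auto
      moreover have "xmax P - xmin P \<le> dist a c" using dist_fst_ge[of c a] assms(10,12) by (simp add: dist_commute)
      moreover have "ymax P - ymin P \<le> dist b d" using dist_snd_ge[of d b] assms(11,13) by (simp add: dist_commute)
      ultimately have "L \<le> 2*\<rho>" using assms(2) by simp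
      thus ?thesis using DL by linarith
    next
      case 2
      hence "a \<in> cball c2 \<rho>" "b \<in> cball c2 \<rho>" "c \<in> cball c2 \<rho>" "d \<in> cball c2 \<rho>" using Vs by auto
      hence "dist a c \<le> 2*\<rho>" "dist b d \<le> 2*\<rho>" using same_ball[of a c2 \<rho> c] same_ball[of b c2 \<rho> d] by auto
      moreover have "xmax P - xmin P \<le> dist a c" using dist_fst_ge[of c a] assms(10,12) by (simp add: dist_commute)
      moreover have "ymax P - ymin P \<le> dist b d" using dist_snd_ge[of d b] assms(11,13) by (simp add: dist_commute)
      ultimately have "L \<le> 2*\<rho>" using assms(2) by simp
      thus ?thesis using DL by linarith
    next
      case 3 thus ?thesis using E[OF inP(1,2) _ _ gab] E'[OF inP(1,2) _ _ gab] by blast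
    next
      case 4 thus ?thesis using E[OF inP(2,3) _ _ gbc] E'[OF inP(2,3) _ _ gbc] by blast
    next
      case 5 thus ?thesis using E[OF inP(3,4) _ _ gcd] E'[OF inP(3,4) _ _ gcd] by blast
    next
      case 6 thus ?thesis using E[OF inP(4,1) _ _ gda] E'[OF inP(4,1) _ _ gda] by blast
    qed
  qed
  from bdd obtain R x where "P \<subseteq> cball x R" unfolding bounded_subset_cball by blast
  hence ne: "{r. \<exists>c1 c2. P \<subseteq> cball c1 r \<union> cball c2 r} \<noteq> {}" by blast
  have "D/2 \<le> r_opt P" unfolding r_opt_def
  proof (rule cInf_greatest[OF ne])
    fix r assume "r \<in> {r. \<exists>c1 c2. P \<subseteq> cball c1 r \<union> cball c2 r}"
    then obtain c1 c2 where "P \<subseteq> cball c1 r \<union> cball c2 r" by blast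
    from key[OF this] show "D/2 \<le> r" by simp
  qed
  thus ?thesis unfolding D_def by simp
qed

end
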